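(* Let $X=PS$ where $P,S\in\mathrm{Sym}(n)$ and $P$ is positive definite. Let $\lambda_{\min},\lambda_{\max}$ be the smallest and largest eigenvalues of $P$, $\varrho=\lambda_{\min}/\lambda_{\max}\in(0,1]$ and $c=\frac{(1-\varrho)^2}{1+\varrho^2}\in[0,1)$. Then $$\operatorname{tr}(X^2)-|X|^2\ge -c\,|\mathring X|^2,$$ where $\mathring X=X-\frac{\operatorname{tr}X}{n}\mathrm{Id}$.
   Context: $\mathrm{Sym}(n)$ denotes real symmetric $n\times n$ matrices; $|X|^2=\operatorname{tr}(XX^{\mathsf T})$ is the squared Frobenius norm. *)

theory Defs
  imports "HOL-Analysis.Analysis"
begin

definition sym_matrix :: "real^'n^'n \<Rightarrow> bool" where
  "sym_matrix A \<longleftrightarrow> transpose A = A"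

definition pos_def_matrix :: "real^'n^'n \<Rightarrow> bool" where
  "pos_def_matrix A \<longleftrightarrow> sym_matrix A \<and> (\<forall>x. x \<noteq> 0 \<longrightarrow> x \<bullet> (A *v x) > 0)"

definition mat_eigenvalues :: "real^'n^'n \<Rightarrow> real set" where
  "mat_eigenvalues A = {l. \<exists>v. v \<noteq> 0 \<and> A *v v = l *\<^sub>R v}"

definition frob_sq :: "real^'n^'n \<Rightarrow> real" where
  "frob_sq X = trace (X ** transpose X)"

definition trace_free :: "real^'n^'n \<Rightarrow> real^'n^'n" where
  "trace_free X = X - (trace X / real CARD('n)) *\<^sub>R mat 1"

end

theory Submission
  imports Defs
begin


lemma sym_inner:
  fixes A :: "real^'n^'n"
  assumes "sym_matrix A"
  shows "x \<bullet> (A *v y) = (A *v x) \<bullet> y"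
proof -
  have "x v* A = A *v x"
    using assms vector_transpose_matrix[of x A] unfolding sym_matrix_def by simp
  then show ?thesis using dot_lmul_matrix[of x A y] by simp
qed


lemma eig_in_subspace:
  fixes A :: "real^'n^'n"
  assumes sym: "sym_matrix A" and W: "subspace W" and inv: "\<And>x. x \<in> W \<Longrightarrow> A *v x \<in> W"
    and x0: "x0 \<in> W" "x0 \<noteq> 0"
  shows "\<exists>u\<in>W. norm u = 1 \<and> (\<exists>l. A *v u = l *\<^sub>R u)"
proof -
  define K where "K = W \<inter> sphere 0 1"
  have cK: "compact K" unfolding K_def
    by (simp add: W closed_Int_compact closed_subspace)
  have "x0 /\<^sub>R norm x0 \<in> K" using x0 W unfolding K_def
    by (simp add: subspace_scale)
  then have neK: "K \<noteq> {}" by auto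
  have cont: "continuous_on K (\<lambda>x. x \<bullet> (A *v x))"
    by (intro continuous_intros linear_continuous_on matrix_vector_mul_linear bounded_linear_intros)
  obtain u where uK: "u \<in> K" and umin: "\<And>y. y \<in> K \<Longrightarrow> u \<bullet> (A *v u) \<le> y \<bullet> (A *v y)"
    using continuous_attains_inf[OF cK neK cont] by blast
  define m where "m = u \<bullet> (A *v u)"
  have uW: "u \<in> W" and nu: "norm u = 1" using uK K_def by auto
  have ge: "y \<bullet> (A *v y) \<ge> m * (y \<bullet> y)" if "y \<in> W" for y
  proof (cases "y = 0")
    case True then show ?thesis by simp
  next
    case False
    have "y /\<^sub>R norm y \<in> K" using that False W unfolding K_def by (simp add: subspace_scale)
    then have "m \<le> (y /\<^sub>R norm y) \<bullet> (A *v (y /\<^sub>R norm y))" using umin m_def by blast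
    also have "\<dots> = (y \<bullet> (A *v y)) / (norm y)^2"
      by (simp add: matrix_vector_mult_scaleR power2_eq_square divide_inverse)
    finally have "m * (norm y)^2 \<le> y \<bullet> (A *v y)"
      using False by (simp add: field_simps)
    then show ?thesis by (simp add: power2_norm_eq_inner)
  qed
  define v where "v = A *v u - m *\<^sub>R u"
  have vW: "v \<in> W" unfolding v_def using inv uW W by (simp add: subspace_diff subspace_scale)
  have orth: "w \<bullet> v = 0" if wW: "w \<in> W" for w
  proof (rule ccontr)
    assume na: "w \<bullet> v \<noteq> 0"
    define \<alpha> where "\<alpha> = w \<bullet> v"
    define \<beta> where "\<beta> = w \<bullet> (A *v w) - m * (w \<bullet> w)"
    have b0: "\<beta> \<ge> 0" using ge[OF wW] \<beta>_def by simp
    define t where "t = - \<alpha> / (\<beta> + 1)"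
    have "u + t *\<^sub>R w \<in> W" using uW wW W by (simp add: subspace_add subspace_scale)
    from ge[OF this] have G: "(u + t *\<^sub>R w) \<bullet> (A *v (u + t *\<^sub>R w)) \<ge> m * ((u + t *\<^sub>R w) \<bullet> (u + t *\<^sub>R w))" .
    have E1: "(u + t *\<^sub>R w) \<bullet> (A *v (u + t *\<^sub>R w)) = m + 2 * t * (w \<bullet> (A *v u)) + t^2 * (w \<bullet> (A *v w))"
      using sym_inner[OF sym, of u w] m_def
      by (simp add: matrix_vector_right_distrib matrix_vector_mult_scaleR inner_add_left inner_add_right
          algebra_simps power2_eq_square inner_commute)
    have E2: "(u + t *\<^sub>R w) \<bullet> (u + t *\<^sub>R w) = 1 + 2 * t * (w \<bullet> u) + t^2 * (w \<bullet> w)"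
    proof -
      have "u \<bullet> u = 1" using nu by (simp add: dot_square_norm)
      then show ?thesis by (simp add: inner_add_left inner_add_right algebra_simps power2_eq_square inner_commute)
    qed
    have E3: "2 * t * \<alpha> + t^2 * \<beta> = (m + 2 * t * (w \<bullet> (A *v u)) + t^2 * (w \<bullet> (A *v w))) - m * (1 + 2 * t * (w \<bullet> u) + t^2 * (w \<bullet> w))"
      unfolding \<alpha>_def \<beta>_def v_def by (simp add: inner_diff_right algebra_simps)
    have "2 * t * \<alpha> + t^2 * \<beta> \<ge> 0" using G unfolding E1 E2 E3 by linarith
    moreover have "2 * t * \<alpha> + t^2 * \<beta> = \<alpha>^2 * (- \<beta> - 2) / (\<beta> + 1)^2"
    proof -
      obtain d where d: "d = \<beta> + 1" "d \<noteq> 0" using b0 by fastforce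
      have "\<beta> = d - 1" using d by simp
      then show ?thesis unfolding t_def d(1)[symmetric] using d(2) by (simp add: field_simps power2_eq_square) (simp add: d(1) algebra_simps)
    qed
    moreover have "\<alpha>^2 * (- \<beta> - 2) / (\<beta> + 1)^2 < 0"
      using b0 na \<alpha>_def by (intro divide_neg_pos mult_pos_neg) auto
    ultimately show False by linarith
  qed
  have "v \<bullet> v = 0" using orth[OF vW] .
  then have "A *v u = m *\<^sub>R u" unfolding v_def by simp
  then show ?thesis using uW nu by blast
qed

lemma eig_sets:
  fixes A :: "real^'n^'n"
  assumes sym: "sym_matrix A"
  shows "k \<le> CARD('n) \<Longrightarrow> \<exists>B. finite B \<and> card B = k \<and> pairwise orthogonal B \<and>
           (\<forall>b\<in>B. norm b = 1 \<and> (\<exists>l. A *v b = l *\<^sub>R b))"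
proof (induction k)
  case 0
  show ?case by (rule exI[of _ "{}"]) simp
next
  case (Suc k)
  then obtain B where B: "finite B" "card B = k" "pairwise orthogonal B"
    "\<And>b. b \<in> B \<Longrightarrow> norm b = 1 \<and> (\<exists>l. A *v b = l *\<^sub>R b)" by auto
  have "0 \<notin> B" using B(4) by force
  then have ind: "independent B" using B(3) pairwise_orthogonal_independent by blast
  have "dim B < DIM(real^'n)" using dim_eq_card_independent[OF ind] B(2) Suc.prems by simp
  then obtain x where x: "x \<noteq> 0" "\<And>y. y \<in> span B \<Longrightarrow> orthogonal x y"
    using orthogonal_to_subspace_exists by blast
  define W where "W = {y. \<forall>b\<in>B. orthogonal b y}"
  have W: "subspace W" unfolding W_def by (rule subspace_orthogonal_to_vectors)
  have xW: "x \<in> W" unfolding W_def using x(2) span_base orthogonal_commute by blast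
  have inv: "A *v y \<in> W" if "y \<in> W" for y
  proof -
    { fix b assume bB: "b \<in> B"
      then obtain l where l: "A *v b = l *\<^sub>R b" using B(4) by blast
      have "b \<bullet> (A *v y) = (A *v b) \<bullet> y" by (rule sym_inner[OF sym])
      also have "\<dots> = l * (b \<bullet> y)" using l by simp
      also have "\<dots> = 0" using that bB unfolding W_def orthogonal_def by simp
      finally have "orthogonal b (A *v y)" unfolding orthogonal_def . }
    then show ?thesis unfolding W_def by blast
  qed
  obtain u where u: "u \<in> W" "norm u = 1" "\<exists>l. A *v u = l *\<^sub>R u"
    using eig_in_subspace[OF sym W inv xW x(1)] by blast
  have uB: "u \<notin> B"
  proof
    assume "u \<in> B"
    then have "orthogonal u u" using u(1) W_def by blast
    then show False using u(2) by (simp add: orthogonal_def)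
  qed
  show ?case
  proof (intro exI conjI)
    show "finite (insert u B)" using B(1) by simp
    show "card (insert u B) = Suc k" using B(1,2) uB by simp
    show "pairwise orthogonal (insert u B)"
      using B(3) u(1) unfolding W_def by (intro pairwise_orthogonal_insert) (auto simp: orthogonal_commute)
    show "\<forall>b\<in>insert u B. norm b = 1 \<and> (\<exists>l. A *v b = l *\<^sub>R b)" using B(4) u by auto
  qed
qed


lemma eig_basis:
  fixes A :: "real^'n^'n"
  assumes sym: "sym_matrix A"
  obtains U :: "'n \<Rightarrow> real^'n" and p :: "'n \<Rightarrow> real"
  where "\<And>k l. U k \<bullet> U l = (if k = l then 1 else 0)"
    and "\<And>k. A *v U k = p k *\<^sub>R U k"
    and "\<And>x. x = (\<Sum>k\<in>UNIV. (U k \<bullet> x) *\<^sub>R U k)"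
proof -
  obtain B where B: "finite B" "card B = CARD('n)" "pairwise orthogonal B"
    "\<And>b. b \<in> B \<Longrightarrow> norm b = 1 \<and> (\<exists>l. A *v b = l *\<^sub>R b)"
    using eig_sets[OF sym, of "CARD('n)"] by auto
  have "0 \<notin> B" using B(4) by force
  then have ind: "independent B" using B(3) pairwise_orthogonal_independent by blast
  have spanB: "UNIV \<subseteq> span B"
    using card_eq_dim[of B UNIV] ind B by simp
  obtain g where g: "bij_betw g (UNIV::'n set) B"
    using finite_same_card_bij[of "UNIV::'n set" B] B(1,2) by auto
  define p where "p k = (SOME l. A *v g k = l *\<^sub>R g k)" for k
  have gB: "g k \<in> B" for k using g bij_betwE by blast
  have ev: "A *v g k = p k *\<^sub>R g k" for k
    unfolding p_def using B(4)[OF gB[of k]] by (metis (mono_tags, lifting) someI_ex)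
  have on: "g k \<bullet> g l = (if k = l then 1 else 0)" for k l
  proof (cases "k = l")
    case True
    then show ?thesis using B(4)[OF gB[of k]] by (simp add: dot_square_norm)
  next
    case False
    then have "g k \<noteq> g l" using g unfolding bij_betw_def inj_on_def by blast
    then show ?thesis using B(3) gB False unfolding pairwise_def orthogonal_def by simp
  qed
  have ex: "x = (\<Sum>k\<in>UNIV. (g k \<bullet> x) *\<^sub>R g k)" for x
  proof -
    define z where "z = x - (\<Sum>k\<in>UNIV. (g k \<bullet> x) *\<^sub>R g k)"
    have zo: "orthogonal z b" if "b \<in> B" for b
    proof -
      have "b \<in> g ` UNIV" using g that bij_betw_imp_surj_on by blast
      then obtain j where j: "b = g j" by blast
      have "g j \<bullet> z = g j \<bullet> x - (\<Sum>k\<in>UNIV. (g k \<bullet> x) * (g j \<bullet> g k))"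
        unfolding z_def by (simp add: inner_diff_right inner_sum_right)
      also have "(\<Sum>k\<in>UNIV. (g k \<bullet> x) * (g j \<bullet> g k)) = (\<Sum>k\<in>UNIV. if j = k then g k \<bullet> x else 0)"
        by (rule sum.cong) (simp_all add: on)
      also have "\<dots> = g j \<bullet> x" by simp
      finally have "g j \<bullet> z = 0" by simp
      then show ?thesis using j by (simp add: orthogonal_def inner_commute)
    qed
    have "orthogonal z z" using orthogonal_to_span[of z B z] spanB zo by blast
    then have "z = 0" by (simp add: orthogonal_def)
    then show ?thesis unfolding z_def by simp
  qed
  show ?thesis using that[OF on ev ex] .
qed



lemma delta_sum:
  fixes U :: "'n \<Rightarrow> real^'n"
  assumes ex: "\<And>x. x = (\<Sum>k\<in>UNIV. (U k \<bullet> x) *\<^sub>R U k)"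
  shows "(\<Sum>k\<in>UNIV. U k $ j * U k $ i) = (if i = j then 1 else 0)"
proof -
  have "(axis j 1 :: real^'n) $ i = (\<Sum>k\<in>UNIV. (U k \<bullet> axis j 1) *\<^sub>R U k) $ i"
    using ex by metis
  also have "\<dots> = (\<Sum>k\<in>UNIV. U k $ j * U k $ i)"
    by (simp add: inner_axis)
  finally show ?thesis by (simp add: axis_def)
qed

lemma trace_basis:
  fixes U :: "'n \<Rightarrow> real^'n" and M :: "real^'n^'n"
  assumes ex: "\<And>x. x = (\<Sum>k\<in>UNIV. (U k \<bullet> x) *\<^sub>R U k)"
  shows "trace M = (\<Sum>k\<in>UNIV. U k \<bullet> (M *v U k))"
proof -
  have "(\<Sum>k\<in>UNIV. U k \<bullet> (M *v U k)) = (\<Sum>k\<in>UNIV. \<Sum>i\<in>UNIV. \<Sum>j\<in>UNIV. M$i$j * (U k $ j * U k $ i))"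
    by (simp add: inner_vec_def matrix_vector_mult_def sum_distrib_left algebra_simps)
  also have "\<dots> = (\<Sum>i\<in>UNIV. \<Sum>k\<in>UNIV. \<Sum>j\<in>UNIV. M$i$j * (U k $ j * U k $ i))"
    by (rule sum.swap)
  also have "\<dots> = (\<Sum>i\<in>UNIV. \<Sum>j\<in>UNIV. \<Sum>k\<in>UNIV. M$i$j * (U k $ j * U k $ i))"
    by (rule sum.cong[OF refl], rule sum.swap)
  also have "\<dots> = (\<Sum>i\<in>UNIV. \<Sum>j\<in>UNIV. M$i$j * (\<Sum>k\<in>UNIV. U k $ j * U k $ i))"
    by (simp add: sum_distrib_left)
  also have "\<dots> = (\<Sum>i\<in>UNIV. M$i$i)"
  proof -
    have md: "(x::real) * (if P then 1 else 0) = (if P then x else 0)" for x P by simp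
    show ?thesis by (simp add: delta_sum[OF ex] md)
  qed
  finally show ?thesis by (simp add: trace_def)
qed

lemma prod_basis:
  fixes U :: "'n \<Rightarrow> real^'n" and M N :: "real^'n^'n"
  assumes ex: "\<And>x. x = (\<Sum>k\<in>UNIV. (U k \<bullet> x) *\<^sub>R U k)"
  shows "U k \<bullet> ((M ** N) *v U l) = (\<Sum>j\<in>UNIV. (U k \<bullet> (M *v U j)) * (U j \<bullet> (N *v U l)))"
proof -
  have "(M ** N) *v U l = M *v (\<Sum>j\<in>UNIV. (U j \<bullet> (N *v U l)) *\<^sub>R U j)"
    by (metis ex matrix_vector_mul_assoc)
  also have "\<dots> = (\<Sum>j\<in>UNIV. (U j \<bullet> (N *v U l)) *\<^sub>R (M *v U j))"
    by (simp add: linear_sum[OF matrix_vector_mul_linear] matrix_vector_mult_scaleR)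
  finally show ?thesis by (simp add: inner_sum_right mult.commute)
qed

lemma frob_trace_free:
  fixes X :: "real^'n^'n"
  shows "frob_sq (trace_free X) = frob_sq X - (trace X)^2 / real CARD('n)"
proof -
  have fr: "frob_sq M = (\<Sum>i\<in>UNIV. \<Sum>j\<in>UNIV. M$i$j * M$i$j)" for M :: "real^'n^'n"
    by (simp add: frob_sq_def trace_def matrix_matrix_mult_def transpose_def)
  define t where "t = trace X / real CARD('n)"
  have row: "(\<Sum>j\<in>UNIV. (X$i$j - t * (if i = j then 1 else 0)) * (X$i$j - t * (if i = j then 1 else 0)))
     = (\<Sum>j\<in>UNIV. X$i$j * X$i$j) - 2 * t * X$i$i + t^2" for i
  proof -
    have "(\<Sum>j\<in>UNIV. (X$i$j - t * (if i = j then 1 else 0)) * (X$i$j - t * (if i = j then 1 else 0)))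
      = (\<Sum>j\<in>UNIV. X$i$j * X$i$j) + (\<Sum>j\<in>UNIV. if i = j then t * t - 2 * t * X$i$j else 0)"
      by (subst sum.distrib[symmetric]) (rule sum.cong, auto simp: algebra_simps)
    then show ?thesis by (simp add: power2_eq_square)
  qed
  have "frob_sq (trace_free X) = (\<Sum>i\<in>UNIV. (\<Sum>j\<in>UNIV. X$i$j * X$i$j) - 2 * t * X$i$i + t^2)"
    unfolding fr trace_free_def t_def[symmetric] using row by (simp add: mat_def)
  also have "\<dots> = frob_sq X - 2 * t * trace X + t^2 * real CARD('n)"
    by (simp add: fr sum.distrib sum_subtractf trace_def sum_distrib_left)
  also have "\<dots> = frob_sq X - (trace X)^2 / real CARD('n)"
    unfolding t_def by (simp add: field_simps power2_eq_square)
  finally show ?thesis .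
qed



lemma cs_sum:
  fixes y :: "'n::finite \<Rightarrow> real"
  shows "(\<Sum>k\<in>UNIV. y k)^2 / real CARD('n) \<le> (\<Sum>k\<in>UNIV. (y k)^2)"
proof -
  define T where "T = (\<Sum>k\<in>UNIV. y k)"
  define n where "n = real CARD('n)"
  have n0: "n > 0" unfolding n_def by simp
  have "0 \<le> (\<Sum>k\<in>UNIV. (y k - T / n)^2)" by (simp add: sum_nonneg)
  also have "\<dots> = (\<Sum>k\<in>UNIV. (y k)^2) - 2 * (T / n) * T + n * (T/n)^2"
  proof -
    define m where "m = T / n"
    have "(\<Sum>k\<in>UNIV. (y k - m)^2) = (\<Sum>k\<in>UNIV. (y k)^2 - (2 * m) * y k + m^2)"
      by (simp add: power2_diff algebra_simps)
    also have "\<dots> = (\<Sum>k\<in>UNIV. (y k)^2) - (2 * m) * T + n * m^2"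
      by (simp add: sum.distrib sum_subtractf sum_distrib_left[symmetric] T_def n_def)
    finally show ?thesis unfolding m_def by simp
  qed
  also have "\<dots> = (\<Sum>k\<in>UNIV. (y k)^2) - T^2 / n"
    using n0 by (simp add: field_simps power2_eq_square)
  finally show ?thesis unfolding T_def n_def by simp
qed

lemma key_real:
  fixes p :: "'n::finite \<Rightarrow> real" and s :: "'n \<Rightarrow> 'n \<Rightarrow> real" and a b :: real
  assumes a0: "0 < a" and pa: "\<And>k. a \<le> p k" and pb: "\<And>k. p k \<le> b"
    and ssym: "\<And>k j. s k j = s j k"
  defines "rho \<equiv> a / b"
  defines "c \<equiv> (1 - rho)^2 / (1 + rho^2)"
  shows "(\<Sum>k\<in>UNIV. \<Sum>j\<in>UNIV. p k * s k j * (p j * s j k))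
       - (\<Sum>k\<in>UNIV. \<Sum>j\<in>UNIV. p k * s k j * (p k * s j k))
       \<ge> - c * ((\<Sum>k\<in>UNIV. \<Sum>j\<in>UNIV. p k * s k j * (p k * s j k)) - (\<Sum>k\<in>UNIV. p k * s k k)^2 / real CARD('n))"
proof -
  obtain k0 :: 'n where True by simp
  have b0: "0 < b" using a0 pa[of k0] pb[of k0] by linarith
  have r0: "0 < rho" unfolding rho_def using a0 b0 by simp
  have d0: "1 + rho^2 > 0" by (simp add: add_pos_nonneg)
  have c0: "c \<ge> 0" unfolding c_def using d0 by simp
  have omc: "1 - c = 2 * rho / (1 + rho^2)"
    unfolding c_def using d0 by (simp add: field_simps power2_eq_square)
  define g where "g x y = x * y - (1 - c) * (x^2 + y^2) / 2" for x y
  have gnn: "g (p k) (p j) \<ge> 0" for k j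
  proof -
    have "g (p k) (p j) = (p j - rho * p k) * (p k - rho * p j) / (1 + rho^2)"
      unfolding g_def omc using d0 by (simp add: field_simps power2_eq_square)
    moreover have "p j - rho * p k \<ge> 0"
    proof -
      have "rho * p k \<le> rho * b" using pb r0 by (simp add: mult_left_mono)
      also have "rho * b = a" unfolding rho_def using b0 by simp
      finally show ?thesis using pa[of j] by linarith
    qed
    moreover have "p k - rho * p j \<ge> 0"
    proof -
      have "rho * p j \<le> rho * b" using pb r0 by (simp add: mult_left_mono)
      also have "rho * b = a" unfolding rho_def using b0 by simp
      finally show ?thesis using pa[of k] by linarith
    qed
    ultimately show ?thesis using d0 by simp
  qed
  have gd: "g x x = c * x^2" for x unfolding g_def by (simp add: field_simps power2_eq_square)
  define F where "F = (\<Sum>k\<in>UNIV. \<Sum>j\<in>UNIV. p k * s k j * (p k * s j k))"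
  define G where "G = (\<Sum>k\<in>UNIV. \<Sum>j\<in>UNIV. p k * s k j * (p j * s j k))"
  define T where "T = (\<Sum>k\<in>UNIV. p k * s k k)"
  have F1: "F = (\<Sum>k\<in>UNIV. \<Sum>j\<in>UNIV. (p k)^2 * (s k j)^2)"
    unfolding F_def by (simp add: ssym[of j k for j k] power2_eq_square algebra_simps)
  have F2: "F = (\<Sum>k\<in>UNIV. \<Sum>j\<in>UNIV. (p j)^2 * (s k j)^2)"
    unfolding F1 by (subst sum.swap) (simp add: ssym)
  have G1: "G = (\<Sum>k\<in>UNIV. \<Sum>j\<in>UNIV. p k * p j * (s k j)^2)"
    unfolding G_def by (simp add: ssym[of j k for j k] power2_eq_square algebra_simps)
  have E: "G - F + c * F = (\<Sum>k\<in>UNIV. \<Sum>j\<in>UNIV. g (p k) (p j) * (s k j)^2)"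
  proof -
    have "G - F + c * F = G - (1 - c) * ((F + F) / 2)" by (simp add: algebra_simps)
    also have "F + F = (\<Sum>k\<in>UNIV. \<Sum>j\<in>UNIV. ((p k)^2 + (p j)^2) * (s k j)^2)"
      by (subst (1) F1, subst F2) (simp add: sum.distrib[symmetric] algebra_simps)
    finally show ?thesis unfolding G1 g_def
      by (simp add: sum_distrib_left sum_divide_distrib sum_subtractf[symmetric] algebra_simps)
  qed
  have "(\<Sum>k\<in>UNIV. \<Sum>j\<in>UNIV. g (p k) (p j) * (s k j)^2) \<ge> (\<Sum>k\<in>UNIV. g (p k) (p k) * (s k k)^2)"
  proof (rule sum_mono)
    fix k :: 'n
    show "g (p k) (p k) * (s k k)^2 \<le> (\<Sum>j\<in>UNIV. g (p k) (p j) * (s k j)^2)"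
      by (rule member_le_sum[where f="\<lambda>j. g (p k) (p j) * (s k j)^2"]) (auto intro: mult_nonneg_nonneg gnn)
  qed
  also have "(\<Sum>k\<in>UNIV. g (p k) (p k) * (s k k)^2) = c * (\<Sum>k\<in>UNIV. (p k * s k k)^2)"
    by (simp add: gd sum_distrib_left power_mult_distrib algebra_simps)
  finally have "G - F + c * F \<ge> c * (\<Sum>k\<in>UNIV. (p k * s k k)^2)" using E by simp
  moreover have "c * (\<Sum>k\<in>UNIV. (p k * s k k)^2) \<ge> c * (T^2 / real CARD('n))"
    unfolding T_def using mult_left_mono[OF cs_sum[of "\<lambda>k. p k * s k k"] c0] by simp
  ultimately have "G - F \<ge> - c * (F - T^2 / real CARD('n))" by (simp add: algebra_simps)
  then show ?thesis unfolding F_def G_def T_def .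
qed



theorem lemma3p5:
  fixes P S :: "real^'n^'n"
  assumes "sym_matrix P" and "sym_matrix S" and "pos_def_matrix P"
  defines "X \<equiv> P ** S"
  defines "lmin \<equiv> Min (mat_eigenvalues P)"
  defines "lmax \<equiv> Max (mat_eigenvalues P)"
  defines "rho \<equiv> lmin / lmax"
  defines "c \<equiv> (1 - rho)^2 / (1 + rho^2)"
  shows "trace (X ** X) - frob_sq X \<ge> - c * frob_sq (trace_free X)"
proof -
  obtain U :: "'n \<Rightarrow> real^'n" and p where
    on: "\<And>k l. U k \<bullet> U l = (if k = l then 1 else 0)"
    and ev: "\<And>k. P *v U k = p k *\<^sub>R U k"
    and ex: "\<And>x. x = (\<Sum>k\<in>UNIV. (U k \<bullet> x) *\<^sub>R U k)"
    using eig_basis[OF assms(1)] by blast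
  have Uz: "U k \<noteq> 0" for k using on[of k k] by auto
  have pin: "p k \<in> mat_eigenvalues P" for k
    unfolding mat_eigenvalues_def using Uz ev by blast
  have sub: "mat_eigenvalues P \<subseteq> range p"
  proof
    fix l assume "l \<in> mat_eigenvalues P"
    then obtain v where v: "v \<noteq> 0" "P *v v = l *\<^sub>R v" unfolding mat_eigenvalues_def by blast
    have "\<exists>k. U k \<bullet> v \<noteq> 0"
    proof (rule ccontr)
      assume "\<not> ?thesis"
      then have "(\<Sum>k\<in>UNIV. (U k \<bullet> v) *\<^sub>R U k) = 0" by simp
      then have "v = 0" using ex[of v] by argo
      then show False using v by simp
    qed
    then obtain k where k: "U k \<bullet> v \<noteq> 0" by blast
    have "U k \<bullet> (P *v v) = (P *v U k) \<bullet> v" by (rule sym_inner[OF assms(1)])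
    then have "l * (U k \<bullet> v) = p k * (U k \<bullet> v)" using v ev by simp
    then have "l = p k" using k by simp
    then show "l \<in> range p" by simp
  qed
  have fin: "finite (mat_eigenvalues P)" by (rule finite_subset[OF sub]) simp
  have ne: "mat_eigenvalues P \<noteq> {}" using pin[of undefined] by auto
  have pos: "l > 0" if "l \<in> mat_eigenvalues P" for l
  proof -
    from that have "\<exists>v. v \<noteq> 0 \<and> P *v v = l *\<^sub>R v" unfolding mat_eigenvalues_def by (rule CollectD)
    then obtain v where v: "v \<noteq> 0" "P *v v = l *\<^sub>R v" by (elim exE conjE)
    have all: "\<forall>x. x \<noteq> 0 \<longrightarrow> x \<bullet> (P *v x) > 0"
      using assms(3) unfolding pos_def_matrix_def by (rule conjunct2)
    have q: "v \<bullet> (P *v v) > 0" using spec[OF all, of v] v(1) by (rule mp)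
    have e: "v \<bullet> (P *v v) = l * (v \<bullet> v)" by (simp only: v(2) inner_scaleR_right)
    have vv: "v \<bullet> v > 0" using v(1) by simp
    show ?thesis
    proof (rule ccontr)
      assume "\<not> l > 0"
      then have "l \<le> 0" by linarith
      then have "l * (v \<bullet> v) \<le> 0" using vv by (simp add: mult_nonpos_nonneg)
      then show False using q e by linarith
    qed
  qed
  have a0: "lmin > 0" unfolding lmin_def using pos Min_in[OF fin ne] by blast
  have pa: "lmin \<le> p k" for k unfolding lmin_def using Min_le[OF fin pin] .
  have pb: "p k \<le> lmax" for k unfolding lmax_def using Max_ge[OF fin pin] .
  define s where "s k j = U k \<bullet> (S *v U j)" for k j
  have ssym: "s k j = s j k" for k j
    unfolding s_def using sym_inner[OF assms(2), of "U k" "U j"] by (simp add: inner_commute)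
  have cPS: "U k \<bullet> ((P ** S) *v U j) = p k * s k j" for k j
  proof -
    have "U k \<bullet> ((P ** S) *v U j) = U k \<bullet> (P *v (S *v U j))" by (simp add: matrix_vector_mul_assoc)
    also have "\<dots> = (P *v U k) \<bullet> (S *v U j)" by (rule sym_inner[OF assms(1)])
    finally show ?thesis by (simp add: ev s_def)
  qed
  have cSP: "U k \<bullet> ((S ** P) *v U j) = p j * s k j" for k j
    by (simp add: matrix_vector_mul_assoc[symmetric] ev matrix_vector_mult_scaleR s_def)
  have tXX: "trace (X ** X) = (\<Sum>k\<in>UNIV. \<Sum>j\<in>UNIV. p k * s k j * (p j * s j k))"
    unfolding trace_basis[OF ex, of "X ** X"] prod_basis[OF ex, of _ X X] unfolding X_def cPS ..
  have trX: "transpose X = S ** P"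
    unfolding X_def matrix_transpose_mul using assms(1,2) unfolding sym_matrix_def by simp
  have fX: "frob_sq X = (\<Sum>k\<in>UNIV. \<Sum>j\<in>UNIV. p k * s k j * (p k * s j k))"
    unfolding frob_sq_def trX trace_basis[OF ex, of "X ** (S ** P)"] prod_basis[OF ex, of _ X "S ** P"]
    unfolding X_def cPS cSP ..
  have tX: "trace X = (\<Sum>k\<in>UNIV. p k * s k k)"
    unfolding trace_basis[OF ex, of X] unfolding X_def cPS ..
  show ?thesis
    unfolding frob_trace_free tXX fX tX c_def rho_def
    by (rule key_real[OF a0 pa pb ssym])
qed

end
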